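(* Let $(u_n)_{n \geq 0}$ be a sequence of integers, not identically zero, satisfying $u_n = a_1 u_{n-1} + \cdots + a_k u_{n-k}$ for all $n \geq k$, with $a_1, \ldots, a_k \in \mathbf{Z}$ and $a_k \neq 0$. Let $\mathbf{K}$ be the splitting field over $\mathbf{Q}$ of $f_u(X) = X^k - a_1 X^{k-1} - \cdots - a_k$, let $\alpha_1, \ldots, \alpha_r \in \mathbf{K}$ be the distinct roots of $f_u$, and let $g_1, \ldots, g_r \in \mathbf{K}[X]$ be the polynomials such that $u_n = \sum_{i=1}^r g_i(n)\alpha_i^n$ for all integers $n \geq 0$. Then $(u_n/n)_{n \geq 1}$ is a linear recurrence if and only if $g_1(0) = \cdots = g_r(0) = 0$. Moreover, in such a case the set $\mathcal{A}_u = \{n \in \mathbf{N} : \gcd(n, u_n) = 1\}$ is finite.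
   Context: $\mathbf{N}$ denotes the set of positive integers. A sequence is a linear recurrence if it satisfies a linear recurrence relation of finite order with constant (complex) coefficients. The polynomials $g_i$ in the representation $u_n = \sum_{i=1}^r g_i(n)\alpha_i^n$ exist and are uniquely determined by $(u_n)$. *)

theory Defs
  imports "HOL-Computational_Algebra.Polynomial" Complex_Main
begin

definition is_linrec :: "(nat \<Rightarrow> complex) \<Rightarrow> bool" where
  "is_linrec w \<longleftrightarrow> (\<exists>d (c :: nat \<Rightarrow> complex). \<forall>n. w (n + d) = (\<Sum>i<d. c i * w (n + i)))"

definition char_poly :: "(nat \<Rightarrow> int) \<Rightarrow> nat \<Rightarrow> complex poly" where
  "char_poly a k = monom 1 k - (\<Sum>i = 1..k. monom (of_int (a i)) (k - i))"

end

theory Submission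
  imports Defs
begin


definition Lop :: "complex poly \<Rightarrow> (nat \<Rightarrow> complex) \<Rightarrow> nat \<Rightarrow> complex" where
  "Lop R s n = (\<Sum>i\<le>degree R. coeff R i * s (n + i))"

lemma Lop_ext: "degree R \<le> N \<Longrightarrow> Lop R s n = (\<Sum>i\<le>N. coeff R i * s (n + i))"
  unfolding Lop_def
  by (rule sum.mono_neutral_left) (auto simp: coeff_eq_0)

lemma Lop_0 [simp]: "Lop 0 s n = 0"
  by (simp add: Lop_def)

lemma Lop_pCons: "Lop (pCons a R) s n = a * s n + Lop R s (Suc n)"
proof -
  have "Lop (pCons a R) s n = (\<Sum>i\<le>Suc (degree R). coeff (pCons a R) i * s (n + i))"
    by (rule Lop_ext) (rule degree_pCons_le)
  also have "\<dots> = a * s n + (\<Sum>i\<le>degree R. coeff R i * s (Suc n + i))"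
    by (subst sum.atMost_Suc_shift) simp
  finally show ?thesis by (simp add: Lop_def)
qed

lemma Lop_add: "Lop (R + S) s n = Lop R s n + Lop S s n"
proof -
  let ?N = "max (degree R) (degree S)"
  have "Lop (R + S) s n = (\<Sum>i\<le>?N. coeff (R+S) i * s (n + i))"
    by (rule Lop_ext) (rule degree_add_le_max)
  also have "\<dots> = (\<Sum>i\<le>?N. coeff R i * s (n + i)) + (\<Sum>i\<le>?N. coeff S i * s (n + i))"
    by (simp add: distrib_right sum.distrib)
  also have "\<dots> = Lop R s n + Lop S s n"
    using Lop_ext[of R ?N s n] Lop_ext[of S ?N s n] by simp
  finally show ?thesis .
qed

lemma Lop_smult: "Lop (smult c R) s n = c * Lop R s n"
proof -
  have "Lop (smult c R) s n = (\<Sum>i\<le>degree R. coeff (smult c R) i * s (n + i))"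
    by (rule Lop_ext) (rule degree_smult_le)
  then show ?thesis by (simp add: Lop_def sum_distrib_left mult.assoc)
qed

lemma Lop_mult: "Lop (R * S) s n = Lop R (Lop S s) n"
proof (induction R arbitrary: n)
  case 0
  then show ?case by simp
next
  case (pCons a R)
  show ?case
    by (simp add: Lop_add Lop_smult Lop_pCons pCons.IH)
qed

lemma Lop_zero_fun [simp]: "Lop R (\<lambda>_. 0) n = 0"
  by (simp add: Lop_def)

lemma Lop_sum_fun: "Lop R (\<lambda>m. \<Sum>x\<in>A. f x m) n = (\<Sum>x\<in>A. Lop R (f x) n)"
  unfolding Lop_def by (simp add: sum_distrib_left sum.swap[of _ A])

lemma Lop_kill_mult:
  assumes "\<forall>n. Lop S s n = 0" shows "Lop (R * S) s n = 0"
proof -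
  have "Lop S s = (\<lambda>_. 0)" by (rule ext) (use assms in simp)
  then show ?thesis by (simp add: Lop_mult)
qed

lemma Lop_shift1:
  "Lop [:-\<alpha>,1:] (\<lambda>n. poly q (of_nat n) * \<alpha>^n) n
     = poly (smult \<alpha> (pcompose q [:1,1:] - q)) (of_nat n) * \<alpha>^n"
proof -
  have "Lop [:-\<alpha>,1:] (\<lambda>n. poly q (of_nat n) * \<alpha>^n) n
     = - \<alpha> * (poly q (of_nat n) * \<alpha>^n) + poly q (of_nat (Suc n)) * \<alpha>^Suc n"
    by (simp add: Lop_pCons)
  also have "\<dots> = \<alpha> * (poly q (1 + of_nat n) - poly q (of_nat n)) * \<alpha>^n"
    by (simp add: right_diff_distrib left_diff_distrib mult_ac)
  also have "\<dots> = poly (smult \<alpha> (pcompose q [:1,1:] - q)) (of_nat n) * \<alpha>^n"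
    by (simp add: poly_pcompose)
  finally show ?thesis .
qed

lemma Lop_shift1_fun:
  "Lop [:-\<alpha>,1:] (\<lambda>n. poly q (of_nat n) * \<alpha>^n)
     = (\<lambda>n. poly (smult \<alpha> (pcompose q [:1,1:] - q)) (of_nat n) * \<alpha>^n)"
  by (rule ext) (rule Lop_shift1)

lemma degree_le_Suc_coeff:
  assumes "degree p \<le> Suc m" "coeff p (Suc m) = 0" shows "degree p \<le> m"
proof (rule ccontr)
  assume "\<not> degree p \<le> m"
  then have d: "degree p = Suc m" using assms by simp
  then have "coeff p (degree p) = 0" using assms(2) by simp
  then have "p = 0" by simp
  then show False using d by simp
qed

lemma degree_shift_diff:
  fixes q :: "complex poly"
  assumes "degree q \<le> Suc m"
  shows "degree (smult \<alpha> (pcompose q [:1,1:] - q)) \<le> m"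
proof -
  have dc: "degree (pcompose q [:1,1:]) = degree q" by (simp add: degree_pcompose)
  have "coeff (pcompose q [:1,1:]) (Suc m) = coeff q (Suc m)"
  proof (cases "degree q = Suc m")
    case True
    have "lead_coeff (pcompose q [:1,1:]) = lead_coeff q"
      using lead_coeff_comp[of "[:1,1:]" q] by simp
    then show ?thesis using True dc by simp
  next
    case False
    then show ?thesis using assms dc by (simp add: coeff_eq_0)
  qed
  then have c0: "coeff (pcompose q [:1,1:] - q) (Suc m) = 0" by simp
  have "degree (pcompose q [:1,1:] - q) \<le> Suc m"
    by (rule degree_diff_le) (use assms dc in simp_all)
  then have "degree (pcompose q [:1,1:] - q) \<le> m"
    using c0 by (rule degree_le_Suc_coeff)
  then show ?thesis using degree_smult_le order_trans by blast
qed

lemma Lop_kill_single: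
  fixes q :: "complex poly"
  assumes "degree q \<le> m"
  shows "Lop ([:-\<alpha>,1:]^Suc m) (\<lambda>n. poly q (of_nat n) * \<alpha>^n) n = 0"
  using assms
proof (induction m arbitrary: q n)
  case 0
  then obtain c where "q = [:c:]" by (metis degree_eq_zeroE le_zero_eq)
  then show ?case by (simp add: Lop_pCons)
next
  case (Suc m)
  have "Lop ([:-\<alpha>,1:]^Suc (Suc m)) (\<lambda>n. poly q (of_nat n) * \<alpha>^n) n
      = Lop ([:-\<alpha>,1:]^Suc m) (Lop [:-\<alpha>,1:] (\<lambda>n. poly q (of_nat n) * \<alpha>^n)) n"
    by (simp only: power_Suc2 Lop_mult)
  also have "\<dots> = Lop ([:-\<alpha>,1:]^Suc m) (\<lambda>n. poly (smult \<alpha> (pcompose q [:1,1:] - q)) (of_nat n) * \<alpha>^n) n"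
    by (simp only: Lop_shift1_fun)
  also have "\<dots> = 0" by (rule Suc.IH) (rule degree_shift_diff[OF Suc.prems])
  finally show ?case .
qed

lemma Lop_kill_sum:
  assumes "finite A" "\<And>x n. x \<in> A \<Longrightarrow> Lop (R x) (f x) n = 0"
  shows "Lop (\<Prod>x\<in>A. R x) (\<lambda>m. \<Sum>x\<in>A. f x m) n = 0"
proof -
  have "Lop (\<Prod>x\<in>A. R x) (f y) n = 0" if "y \<in> A" for y n
  proof -
    have "(\<Prod>x\<in>A. R x) = (\<Prod>x\<in>A-{y}. R x) * R y"
      using assms(1) that by (metis mult.commute prod.remove)
    then show ?thesis using Lop_kill_mult assms(2) that by simp
  qed
  then show ?thesis by (simp add: Lop_sum_fun)
qed

lemma Lop_linrec:
  assumes "R \<noteq> 0" "\<forall>n. Lop R s n = 0" shows "is_linrec s"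
proof -
  let ?d = "degree R" let ?l = "coeff R (degree R)"
  have l: "?l \<noteq> 0" using assms by simp
  have "\<forall>n. s (n + ?d) = (\<Sum>i<?d. (- coeff R i / ?l) * s (n + i))"
  proof
    fix n
    have "0 = (\<Sum>i<?d. coeff R i * s (n + i)) + ?l * s (n + ?d)"
      using assms(2) by (simp add: Lop_def lessThan_Suc_atMost[symmetric])
    then have "s (n + ?d) = - (\<Sum>i<?d. coeff R i * s (n + i)) / ?l"
      using l by (simp add: field_simps add_eq_0_iff)
    then show "s (n + ?d) = (\<Sum>i<?d. (- coeff R i / ?l) * s (n + i))"
      by (simp add: sum_divide_distrib sum_negf[symmetric])
  qed
  then show ?thesis unfolding is_linrec_def
    by (intro exI[of _ "degree R"] exI[of _ "\<lambda>i. - coeff R i / coeff R (degree R)"])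
qed


lemma poly_nat_zero:
  fixes q :: "complex poly"
  assumes "\<And>n. poly q (of_nat n) = 0" shows "q = 0"
proof (rule ccontr)
  assume "q \<noteq> 0"
  then have "finite {x. poly q x = 0}" by (rule poly_roots_finite)
  moreover have "(\<nat> :: complex set) \<subseteq> {x. poly q x = 0}"
    using assms by (auto elim: Nats_cases)
  ultimately have "finite (\<nat> :: complex set)" by (rule finite_subset[rotated])
  then show False using Nats_infinite by blast
qed

lemma coeff_comp_shift_deg:
  fixes q :: "complex poly"
  shows "coeff (pcompose q [:1,1:]) (degree q) = lead_coeff q"
    and "degree (pcompose q [:1,1:]) = degree q"
  using lead_coeff_comp[of "[:1,1:]" q] by (simp_all add: degree_pcompose)

lemma expoly_unique_aux:
  fixes A :: "complex set"
  assumes A: "finite A" "0 \<notin> A"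
  shows "\<forall>p. (\<Sum>\<alpha>\<in>A. if p \<alpha> = 0 then 0 else Suc (degree (p \<alpha>))) = N \<longrightarrow>
    (\<forall>n. (\<Sum>\<alpha>\<in>A. poly (p \<alpha>) (of_nat n) * \<alpha>^n) = 0) \<longrightarrow> (\<forall>\<alpha>\<in>A. p \<alpha> = 0)"
proof (induction N rule: less_induct)
  case (less N)
  show ?case
  proof (intro allI impI)
    fix p :: "complex \<Rightarrow> complex poly"
    let ?M = "\<lambda>p. (\<Sum>\<alpha>\<in>A. if p \<alpha> = (0::complex poly) then 0 else Suc (degree (p \<alpha>)))"
    assume MN: "?M p = N" and S: "\<forall>n. (\<Sum>\<alpha>\<in>A. poly (p \<alpha>) (of_nat n) * \<alpha>^n) = 0"
    show "\<forall>\<alpha>\<in>A. p \<alpha> = 0"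
    proof (rule ccontr)
      assume "\<not> (\<forall>\<alpha>\<in>A. p \<alpha> = 0)"
      then obtain \<beta> where \<beta>: "\<beta> \<in> A" "p \<beta> \<noteq> 0" by blast
      define p' where "p' \<alpha> = smult \<alpha> (pcompose (p \<alpha>) [:1,1:]) - smult \<beta> (p \<alpha>)" for \<alpha>
      have tm: "poly (p' \<alpha>) (of_nat n) * \<alpha>^n
          = poly (p \<alpha>) (of_nat (Suc n)) * \<alpha>^Suc n - \<beta> * (poly (p \<alpha>) (of_nat n) * \<alpha>^n)" for \<alpha> n
        by (simp add: p'_def poly_pcompose right_diff_distrib mult_ac add.commute)
      have S': "\<forall>n. (\<Sum>\<alpha>\<in>A. poly (p' \<alpha>) (of_nat n) * \<alpha>^n) = 0"
      proof
        fix n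
        have "(\<Sum>\<alpha>\<in>A. poly (p' \<alpha>) (of_nat n) * \<alpha>^n)
            = (\<Sum>\<alpha>\<in>A. poly (p \<alpha>) (of_nat (Suc n)) * \<alpha>^Suc n) - \<beta> * (\<Sum>\<alpha>\<in>A. poly (p \<alpha>) (of_nat n) * \<alpha>^n)"
          by (simp only: tm sum_subtractf sum_distrib_left)
        also have "\<dots> = 0" using S[rule_format, of "Suc n"] S[rule_format, of n] by simp
        finally show "(\<Sum>\<alpha>\<in>A. poly (p' \<alpha>) (of_nat n) * \<alpha>^n) = 0" .
      qed
      have other: "p' \<alpha> \<noteq> 0 \<and> degree (p' \<alpha>) = degree (p \<alpha>)" if "\<alpha> \<noteq> \<beta>" "p \<alpha> \<noteq> 0" for \<alpha>
      proof -
        let ?d = "degree (p \<alpha>)"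
        have c: "coeff (p' \<alpha>) ?d = (\<alpha> - \<beta>) * lead_coeff (p \<alpha>)"
          by (simp add: p'_def coeff_comp_shift_deg left_diff_distrib)
        have "coeff (p' \<alpha>) ?d \<noteq> 0" using c that by simp
        then have 1: "p' \<alpha> \<noteq> 0" and 2: "?d \<le> degree (p' \<alpha>)" using le_degree by auto
        have a1: "degree (smult \<alpha> (pcompose (p \<alpha>) [:1,1:])) \<le> ?d"
          using degree_smult_le[of \<alpha> "pcompose (p \<alpha>) [:1,1:]"] coeff_comp_shift_deg(2)[of "p \<alpha>"] by simp
        have a2: "degree (smult \<beta> (p \<alpha>)) \<le> ?d" by (rule degree_smult_le)
        have "degree (p' \<alpha>) \<le> ?d" unfolding p'_def using a1 a2 by (rule degree_diff_le)
        then show ?thesis using 1 2 by simp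
      qed
      have zero: "p' \<alpha> = 0" if "p \<alpha> = 0" for \<alpha> using that by (simp add: p'_def)
      have pb: "(if p' \<beta> = 0 then 0 else Suc (degree (p' \<beta>))) < Suc (degree (p \<beta>))"
      proof (cases "degree (p \<beta>)")
        case 0
        then obtain c where "p \<beta> = [:c:]" by (metis degree_eq_zeroE)
        then have "p' \<beta> = 0" by (simp add: p'_def)
        then show ?thesis by simp
      next
        case (Suc m)
        have eq: "p' \<beta> = smult \<beta> (pcompose (p \<beta>) [:1,1:] - p \<beta>)"
          by (simp add: p'_def smult_diff_right)
        have "degree (p' \<beta>) \<le> m" unfolding eq by (rule degree_shift_diff) (simp add: Suc)
        then show ?thesis using Suc by simp
      qed
      have "?M p' < ?M p"
      proof (rule sum_strict_mono_ex1[OF A(1)])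
        show "\<forall>x\<in>A. (if p' x = 0 then 0 else Suc (degree (p' x))) \<le> (if p x = 0 then 0 else Suc (degree (p x)))"
        proof
          fix x assume "x \<in> A"
          show "(if p' x = 0 then 0 else Suc (degree (p' x))) \<le> (if p x = 0 then 0 else Suc (degree (p x)))"
          proof (cases "x = \<beta>")
            case True then show ?thesis using pb \<beta>(2) by (cases "p' \<beta> = 0") simp_all
          next
            case False
            show ?thesis
            proof (cases "p x = 0")
              case True then show ?thesis using zero[of x] by simp
            next
              case pF: False then show ?thesis using other[OF False pF] by simp
            qed
          qed
        qed
        show "\<exists>a\<in>A. (if p' a = 0 then 0 else Suc (degree (p' a))) < (if p a = 0 then 0 else Suc (degree (p a)))"
          using pb \<beta> by (intro bexI[of _ \<beta>]) simp_all
      qed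
      then have "?M p' < N" using MN by simp
      then have allz: "\<forall>\<alpha>\<in>A. p' \<alpha> = 0"
        using less.IH[of "?M p'", THEN spec, of p'] S' by simp
      have po: "p \<alpha> = 0" if "\<alpha> \<in> A" "\<alpha> \<noteq> \<beta>" for \<alpha>
      proof (rule ccontr)
        assume "p \<alpha> \<noteq> 0"
        then have "p' \<alpha> \<noteq> 0" using other[OF that(2)] by simp
        then show False using allz that(1) by simp
      qed
      have "poly (p \<beta>) (of_nat n) = 0" for n
      proof -
        have "(\<Sum>\<alpha>\<in>A. poly (p \<alpha>) (of_nat n) * \<alpha>^n) = poly (p \<beta>) (of_nat n) * \<beta>^n
              + (\<Sum>\<alpha>\<in>A-{\<beta>}. poly (p \<alpha>) (of_nat n) * \<alpha>^n)"
          using A(1) \<beta>(1) by (simp add: sum.remove)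
        also have "(\<Sum>\<alpha>\<in>A-{\<beta>}. poly (p \<alpha>) (of_nat n) * \<alpha>^n) = 0"
          by (rule sum.neutral) (use po in auto)
        finally have "poly (p \<beta>) (of_nat n) * \<beta>^n = 0" using S by simp
        moreover have "\<beta> \<noteq> 0" using A(2) \<beta>(1) by auto
        ultimately show ?thesis by simp
      qed
      then have "p \<beta> = 0" by (rule poly_nat_zero)
      then show False using \<beta> by simp
    qed
  qed
qed

lemma expoly_unique:
  fixes A :: "complex set"
  assumes "finite A" "0 \<notin> A" "\<And>n. (\<Sum>\<alpha>\<in>A. poly (p \<alpha>) (of_nat n) * \<alpha>^n) = 0"
  shows "\<forall>\<alpha>\<in>A. p \<alpha> = 0"
  using expoly_unique_aux[OF assms(1,2)] assms(3) by blast



lemma coeff_char_poly: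
  "coeff (char_poly a k) i = (if i = k then 1 else 0) - (\<Sum>j = 1..k. if i = k - j then of_int (a j) else 0)"
  unfolding char_poly_def coeff_diff coeff_sum coeff_monom 
  by (intro arg_cong2[where f="(-)"] sum.cong refl) auto

lemma char_poly_props:
  assumes k: "k \<ge> 1"
  shows "coeff (char_poly a k) k = 1" "degree (char_poly a k) = k"
    "\<And>i. coeff (char_poly a k) i \<in> \<int>" "poly (char_poly a k) 0 = - of_int (a k)"
proof -
  have z: "(\<Sum>j = 1..k. if k = k - j then (of_int (a j)::complex) else 0) = 0"
    by (rule sum.neutral) auto
  show c: "coeff (char_poly a k) k = 1"
    unfolding coeff_char_poly z by simp
  have "degree (char_poly a k) \<le> k"
  proof (rule degree_le, intro allI impI)
    fix i assume "k < i"
    have "(\<Sum>j = 1..k. if i = k - j then (of_int (a j)::complex) else 0) = 0"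
      by (rule sum.neutral) (use \<open>k < i\<close> in auto)
    then show "coeff (char_poly a k) i = 0" using \<open>k < i\<close> unfolding coeff_char_poly by simp
  qed
  moreover have "k \<le> degree (char_poly a k)" using c by (intro le_degree) simp
  ultimately show "degree (char_poly a k) = k" by simp
  show "\<And>i. coeff (char_poly a k) i \<in> \<int>"
    unfolding coeff_char_poly by (intro Ints_diff Ints_sum) auto
  have "poly (char_poly a k) 0 = coeff (char_poly a k) 0" by (simp add: poly_0_coeff_0)
  also have "\<dots> = - (\<Sum>j = 1..k. if j = k then of_int (a j) else 0)"
  proof -
    have "(\<Sum>j = 1..k. if 0 = k - j then (of_int (a j)::complex) else 0)
        = (\<Sum>j = 1..k. if j = k then of_int (a j) else 0)"
      by (rule sum.cong) auto
    then show ?thesis unfolding coeff_char_poly using k by simp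
  qed
  also have "\<dots> = - of_int (a k)" using k by simp
  finally show "poly (char_poly a k) 0 = - of_int (a k)" .
qed

lemma w_repr:
  fixes A :: "complex set" and g :: "complex \<Rightarrow> complex poly" and u :: "nat \<Rightarrow> int"
  assumes repr: "\<forall>n. of_int (u n) = (\<Sum>\<alpha>\<in>A. poly (g \<alpha>) (of_nat n) * \<alpha> ^ n)"
    and g0: "\<forall>\<alpha>\<in>A. poly (g \<alpha>) 0 = 0"
  shows "\<exists>q. \<forall>m. (of_int (u (m + 1)) / of_nat (m + 1) :: complex) = (\<Sum>\<alpha>\<in>A. poly (q \<alpha>) (of_nat m) * \<alpha> ^ m)"
proof -
  define h where "h \<alpha> = g \<alpha> div [:0,1:]" for \<alpha>
  have gh: "g \<alpha> = [:0,1:] * h \<alpha>" if "\<alpha> \<in> A" for \<alpha>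
  proof -
    have "[:-0,1:] dvd g \<alpha>" using g0 that poly_eq_0_iff_dvd by blast
    then have "[:0,1:] dvd g \<alpha>" by simp
    then show ?thesis unfolding h_def by (rule dvd_mult_div_cancel[symmetric])
  qed
  define q where "q \<alpha> = smult \<alpha> (pcompose (h \<alpha>) [:1,1:])" for \<alpha>
  have "(of_int (u (m + 1)) / of_nat (m + 1) :: complex) = (\<Sum>\<alpha>\<in>A. poly (q \<alpha>) (of_nat m) * \<alpha> ^ m)" for m
  proof -
    have nz: "(of_nat (m + 1) :: complex) \<noteq> 0" by (simp only: of_nat_eq_0_iff)
    have "(of_int (u (m + 1)) :: complex) = (\<Sum>\<alpha>\<in>A. poly (g \<alpha>) (of_nat (m+1)) * \<alpha> ^ (m+1))"
      using repr by blast
    also have "\<dots> = (\<Sum>\<alpha>\<in>A. of_nat (m + 1) * (poly (q \<alpha>) (of_nat m) * \<alpha> ^ m))"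
    proof (rule sum.cong[OF refl])
      fix \<alpha> assume "\<alpha> \<in> A"
      then show "poly (g \<alpha>) (of_nat (m+1)) * \<alpha> ^ (m+1) = of_nat (m + 1) * (poly (q \<alpha>) (of_nat m) * \<alpha> ^ m)"
        by (simp add: gh q_def poly_pcompose add.commute mult_ac)
    qed
    also have "\<dots> = of_nat (m + 1) * (\<Sum>\<alpha>\<in>A. poly (q \<alpha>) (of_nat m) * \<alpha> ^ m)"
      by (simp add: sum_distrib_left)
    finally show ?thesis using nz by (simp add: field_simps)
  qed
  then show ?thesis by blast
qed

lemma w_kill:
  fixes A :: "complex set"
  assumes "finite A" "\<forall>m. w m = (\<Sum>\<alpha>\<in>A. poly (q \<alpha>) (of_nat m) * \<alpha> ^ m)"
  shows "Lop (\<Prod>\<alpha>\<in>A. [:-\<alpha>,1:]^Suc (degree (q \<alpha>))) w n = 0"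
proof -
  have "w = (\<lambda>m. \<Sum>\<alpha>\<in>A. poly (q \<alpha>) (of_nat m) * \<alpha> ^ m)" using assms(2) by auto
  then show ?thesis
    using Lop_kill_sum[OF assms(1), of "\<lambda>\<alpha>. [:-\<alpha>,1:]^Suc (degree (q \<alpha>))" "\<lambda>\<alpha> n. poly (q \<alpha>) (of_nat n) * \<alpha> ^ n"]
      Lop_kill_single[OF order_refl] by simp
qed


lemma Ints_coeff_power:
  assumes "\<And>i. coeff p i \<in> \<int>" shows "coeff (p ^ N) i \<in> \<int>"
proof (induction N arbitrary: i)
  case 0 then show ?case by (simp add: coeff_1)
next
  case (Suc N)
  then show ?case using assms by (simp add: coeff_mult Ints_sum Ints_mult)
qed

lemma fin_part:
  fixes T :: "complex poly" and u :: "nat \<Rightarrow> int"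
  assumes monic: "lead_coeff T = 1" and ints: "\<And>i. coeff T i \<in> \<int>"
    and kill: "\<And>n. Lop T (\<lambda>m. of_int (u (m + 1)) / of_nat (m + 1)) n = 0"
  shows "finite {n :: nat. n \<ge> 1 \<and> gcd (int n) (u n) = 1}"
proof -
  define w :: "nat \<Rightarrow> complex" where "w = (\<lambda>m. of_int (u (m + 1)) / of_nat (m + 1))"
  define D where "D = degree T"
  have rec: "w (n + D) = - (\<Sum>i<D. coeff T i * w (n + i))" for n
  proof -
    have "0 = (\<Sum>i<D. coeff T i * w (n + i)) + coeff T D * w (n + D)"
      using kill[of n] by (simp add: Lop_def w_def D_def lessThan_Suc_atMost[symmetric])
    then show ?thesis using monic by (simp add: D_def add_eq_0_iff)
  qed
  have int: "of_nat (fact D) * w m \<in> \<int>" for m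
  proof (induction m rule: less_induct)
    case (less m)
    show ?case
    proof (cases "m < D")
      case True
      have "Suc m dvd fact D" using True by (intro dvd_fact) auto
      then obtain r where r: "fact D = Suc m * r" by blast
      have nz: "(of_nat (m+1)::complex) \<noteq> 0" by (simp only: of_nat_eq_0_iff)
      have "of_nat (fact D) * w m = (of_nat (m+1) * of_nat r) * of_int (u (m + 1)) / of_nat (m+1)"
        unfolding w_def r by (simp only: Suc_eq_plus1 of_nat_mult times_divide_eq_right)
      also have "\<dots> = of_nat r * of_int (u (m + 1))" using nz by simp
      finally have "of_nat (fact D) * w m = of_nat r * of_int (u (m + 1))" .
      then show ?thesis by simp
    next
      case False
      then obtain n where n: "m = n + D" by (metis add.commute le_add_diff_inverse not_less)
      have "of_nat (fact D) * w m = - (\<Sum>i<D. coeff T i * (of_nat (fact D) * w (n + i)))"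
        unfolding n rec by (simp add: sum_distrib_left mult_ac)
      also have "\<dots> \<in> \<int>"
      proof (rule Ints_minus, rule Ints_sum, rule Ints_mult[OF ints])
        fix i assume "i \<in> {..<D}"
        then show "of_nat (fact D) * w (n + i) \<in> \<int>" using less n by simp
      qed
      finally show ?thesis .
    qed
  qed
  have "{n :: nat. n \<ge> 1 \<and> gcd (int n) (u n) = 1} \<subseteq> {..fact D}"
  proof (rule subsetI)
    fix n :: nat assume "n \<in> {n :: nat. n \<ge> 1 \<and> gcd (int n) (u n) = 1}"
    then have n1: "n \<ge> 1" and g: "gcd (int n) (u n) = 1" by auto
    then obtain m where m: "n = m + 1" by (metis add.commute le_add_diff_inverse)
    obtain z where z: "of_nat (fact D) * w m = of_int z" using int[of m] by (auto elim: Ints_cases)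
    have nz: "(of_nat n::complex) \<noteq> 0" using n1 by simp
    have "of_nat (fact D) * of_int (u n) / of_nat n = (of_int z :: complex)"
      using z unfolding w_def m by simp
    then have "of_nat (fact D) * of_int (u n) = (of_int z * of_nat n :: complex)"
      using nz by (simp add: divide_eq_eq)
    then have "(of_int (int (fact D) * u n) :: complex) = of_int (z * int n)" by simp
    then have "int (fact D) * u n = z * int n" by (simp only: of_int_eq_iff)
    then have "int n dvd int (fact D) * u n" by simp
    moreover have "coprime (int n) (u n)" using g by (simp add: coprime_iff_gcd_eq_1)
    ultimately have "int n dvd int (fact D)" using coprime_dvd_mult_left_iff by blast
    then have "n dvd fact D" by (simp only: of_nat_dvd_iff)
    then have "n \<le> fact D" by (rule dvd_imp_le) simp
    then show "n \<in> {..fact D}" by simp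
  qed
  then show ?thesis by (rule finite_subset) simp
qed


lemma forward_dir:
  fixes A :: "complex set" and g :: "complex \<Rightarrow> complex poly" and u :: "nat \<Rightarrow> int"
    and c :: "nat \<Rightarrow> complex" and w :: "nat \<Rightarrow> complex"
  assumes A: "finite A" "0 \<notin> A"
    and repr: "\<forall>n. of_int (u n) = (\<Sum>\<alpha>\<in>A. poly (g \<alpha>) (of_nat n) * \<alpha> ^ n)"
    and w_def: "w = (\<lambda>m. of_int (u (m + 1)) / of_nat (m + 1))"
    and rec: "\<forall>n. w (n + d) = (\<Sum>i<d. c i * w (n + i))"
  shows "\<forall>\<alpha>\<in>A. poly (g \<alpha>) 0 = 0"
proof -
  define E :: "nat \<Rightarrow> complex poly" where "E i = (\<Prod>j\<in>{..d}-{i}. [:of_nat (1+j), 1:])" for i :: nat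
  define Y where "Y i \<alpha> = smult (\<alpha>^(i+1)) (pcompose (g \<alpha>) [:of_nat (1+i), 1:]) * E i" for i \<alpha>
  define H where "H \<alpha> = Y d \<alpha> - (\<Sum>i<d. smult (c i) (Y i \<alpha>))" for \<alpha>
  define P where "P n = (\<Prod>j\<le>d. (of_nat (1+j) + of_nat n :: complex))" for n :: nat
  have polyE: "poly (E i) x = (\<Prod>j\<in>{..d}-{i}. of_nat (1+j) + x)" for i x
    by (simp add: E_def poly_prod)
  have uE: "of_int (u (n+i+1)) * poly (E i) (of_nat n) = (\<Sum>\<alpha>\<in>A. poly (Y i \<alpha>) (of_nat n) * \<alpha>^n)" for i n
  proof -
    have "of_int (u (n+i+1)) * poly (E i) (of_nat n)
        = (\<Sum>\<alpha>\<in>A. poly (g \<alpha>) (of_nat (n+i+1)) * \<alpha> ^ (n+i+1) * poly (E i) (of_nat n))"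
      using repr by (simp add: sum_distrib_right)
    also have "\<dots> = (\<Sum>\<alpha>\<in>A. poly (Y i \<alpha>) (of_nat n) * \<alpha>^n)"
    proof (rule sum.cong[OF refl])
      fix \<alpha>
      have "(of_nat (n+i+1) :: complex) = of_nat (1+i) + of_nat n" by simp
      then show "poly (g \<alpha>) (of_nat (n+i+1)) * \<alpha> ^ (n+i+1) * poly (E i) (of_nat n) = poly (Y i \<alpha>) (of_nat n) * \<alpha>^n"
        unfolding Y_def by (simp add: poly_pcompose power_add mult_ac add_ac)
    qed
    finally show ?thesis .
  qed
  have wE: "w (n+i) * P n = of_int (u (n+i+1)) * poly (E i) (of_nat n)" if "i \<le> d" for i n
  proof -
    have "P n = (of_nat (1+i) + of_nat n) * (\<Prod>j\<in>{..d}-{i}. of_nat (1+j) + of_nat n)"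
      unfolding P_def using that by (subst prod.remove[of _ i]) auto
    moreover have "(of_nat (1+i) + of_nat n :: complex) = of_nat (n+i+1)" by simp
    moreover have "(of_nat (n+i+1) :: complex) \<noteq> 0" by (simp only: of_nat_eq_0_iff)
    ultimately show ?thesis unfolding w_def polyE by (simp add: field_simps)
  qed
  have sumH: "(\<Sum>\<alpha>\<in>A. poly (H \<alpha>) (of_nat n) * \<alpha>^n) = 0" for n
  proof -
    have "(\<Sum>\<alpha>\<in>A. poly (H \<alpha>) (of_nat n) * \<alpha>^n)
        = (\<Sum>\<alpha>\<in>A. poly (Y d \<alpha>) (of_nat n) * \<alpha>^n - (\<Sum>i<d. c i * (poly (Y i \<alpha>) (of_nat n) * \<alpha>^n)))"
      by (rule sum.cong[OF refl]) (simp add: H_def poly_sum right_diff_distrib left_diff_distrib sum_distrib_left sum_distrib_right mult.commute mult.left_commute)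
    also have "\<dots> = (\<Sum>\<alpha>\<in>A. poly (Y d \<alpha>) (of_nat n) * \<alpha>^n) - (\<Sum>i<d. c i * (\<Sum>\<alpha>\<in>A. poly (Y i \<alpha>) (of_nat n) * \<alpha>^n))"
      by (simp add: sum_subtractf sum_distrib_left sum.swap[of _ A])
    also have "\<dots> = w (n+d) * P n - (\<Sum>i<d. c i * (w (n+i) * P n))"
      using uE wE by simp
    also have "\<dots> = P n * (w (n+d) - (\<Sum>i<d. c i * w (n+i)))"
      by (simp add: sum_distrib_left right_diff_distrib mult_ac)
    also have "\<dots> = 0" using rec by simp
    finally show ?thesis .
  qed
  have H0: "\<forall>\<alpha>\<in>A. H \<alpha> = 0" by (rule expoly_unique[OF A sumH])
  show ?thesis
  proof
    fix \<alpha> assume \<alpha>: "\<alpha> \<in> A"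
    define x0 :: complex where "x0 = - of_nat (1+d)"
    have Ei: "poly (E i) x0 = 0" if "i < d" for i
    proof -
      have "d \<in> {..d}-{i}" using that by auto
      then show ?thesis unfolding polyE x0_def
        by (intro prod_zero) auto
    qed
    have x0z: "of_nat (1+d) + x0 = 0" "1 + of_nat d + x0 = 0" by (simp_all add: x0_def)
    have Ed: "poly (E d) x0 \<noteq> 0"
      unfolding polyE x0_def by (simp add: prod_zero_iff)
    have "0 = poly (H \<alpha>) x0" using H0 \<alpha> by simp
    also have "\<dots> = \<alpha>^(d+1) * poly (g \<alpha>) 0 * poly (E d) x0"
      by (simp add: H_def Y_def poly_sum poly_pcompose Ei x0z)
    finally have "\<alpha>^(d+1) * poly (g \<alpha>) 0 * poly (E d) x0 = 0" by simp
    moreover have "\<alpha> \<noteq> 0" using A(2) \<alpha> by auto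
    ultimately show "poly (g \<alpha>) 0 = 0" using Ed by simp
  qed
qed


theorem lemma2p1:
  fixes u :: "nat \<Rightarrow> int" and a :: "nat \<Rightarrow> int" and k :: nat
    and g :: "complex \<Rightarrow> complex poly"
  assumes nonzero: "\<exists>n. u n \<noteq> 0"
    and rec: "\<forall>n\<ge>k. u n = (\<Sum>j = 1..k. a j * u (n - j))"
    and ak: "a k \<noteq> 0"
    and repr: "\<forall>n. of_int (u n) = (\<Sum>\<alpha>\<in>{z. poly (char_poly a k) z = 0}. poly (g \<alpha>) (of_nat n) * \<alpha> ^ n)"
  shows "(is_linrec (\<lambda>m. of_int (u (m + 1)) / of_nat (m + 1))
            \<longleftrightarrow> (\<forall>\<alpha>\<in>{z. poly (char_poly a k) z = 0}. poly (g \<alpha>) 0 = 0))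
       \<and> ((\<forall>\<alpha>\<in>{z. poly (char_poly a k) z = 0}. poly (g \<alpha>) 0 = 0)
            \<longrightarrow> finite {n :: nat. n \<ge> 1 \<and> gcd (int n) (u n) = 1})"
proof -
  define f where "f = char_poly a k"
  define A where "A = {z. poly f z = 0}"
  define w :: "nat \<Rightarrow> complex" where "w = (\<lambda>m. of_int (u (m + 1)) / of_nat (m + 1))"
  have k1: "k \<ge> 1"
  proof (rule ccontr)
    assume "\<not> k \<ge> 1"
    then have "k = 0" by simp
    then have "u n = 0" for n using rec by simp
    then show False using nonzero by blast
  qed
  note props = char_poly_props[OF k1, of a, folded f_def]
  have f0: "f \<noteq> 0" using props(1) by auto
  have finA: "finite A" unfolding A_def using f0 by (rule poly_roots_finite)
  have A0: "0 \<notin> A" unfolding A_def using props(4) ak by simp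
  have repr': "\<forall>n. of_int (u n) = (\<Sum>\<alpha>\<in>A. poly (g \<alpha>) (of_nat n) * \<alpha> ^ n)"
    using repr unfolding A_def f_def .
  have fwd: "\<forall>\<alpha>\<in>A. poly (g \<alpha>) 0 = 0" if lr: "is_linrec w"
  proof -
    obtain d c where "\<forall>n. w (n + d) = (\<Sum>i<d. c i * w (n + i))"
      using lr unfolding is_linrec_def by blast
    then show ?thesis by (rule forward_dir[OF finA A0 repr' w_def])
  qed
  have bwd: "is_linrec w \<and> finite {n :: nat. n \<ge> 1 \<and> gcd (int n) (u n) = 1}"
    if g0: "\<forall>\<alpha>\<in>A. poly (g \<alpha>) 0 = 0"
  proof -
    obtain q where q: "\<forall>m. w m = (\<Sum>\<alpha>\<in>A. poly (q \<alpha>) (of_nat m) * \<alpha> ^ m)"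
      using w_repr[OF repr' g0] unfolding w_def by blast
    define S where "S = (\<Prod>\<alpha>\<in>A. [:-\<alpha>,1:]^Suc (degree (q \<alpha>)))"
    have kill: "Lop S w n = 0" for n unfolding S_def by (rule w_kill[OF finA q])
    have pw: "[:-\<alpha>,1:]^m \<noteq> 0" for \<alpha> :: complex and m by (rule power_not_zero) simp
    have S0: "S \<noteq> 0" unfolding S_def
      by (simp only: prod_zero_iff[OF finA] pw) simp
    have lin: "is_linrec w" using Lop_linrec[OF S0] kill by blast
    define N where "N = (\<Sum>\<alpha>\<in>A. Suc (degree (q \<alpha>)))"
    have "S dvd f ^ N"
    proof -
      have e: "f ^ N = (\<Prod>\<alpha>\<in>A. f ^ Suc (degree (q \<alpha>)))" unfolding N_def by (rule power_sum)
      have "S dvd (\<Prod>\<alpha>\<in>A. f ^ Suc (degree (q \<alpha>)))"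
        unfolding S_def
      proof (rule prod_dvd_prod)
        fix \<alpha> assume "\<alpha> \<in> A"
        then have "poly f \<alpha> = 0" by (simp add: A_def)
        then have "[:-\<alpha>,1:] dvd f" by (simp only: poly_eq_0_iff_dvd)
        then show "[:-\<alpha>,1:]^Suc (degree (q \<alpha>)) dvd f ^ Suc (degree (q \<alpha>))" by (rule dvd_power_same)
      qed
      then show ?thesis by (subst e)
    qed
    then obtain Q where Q: "f ^ N = S * Q" by (elim dvdE)
    have killT: "Lop (f ^ N) w n = 0" for n
      unfolding Q mult.commute[of S Q] by (rule Lop_kill_mult) (simp add: kill)
    have lc: "lead_coeff (f ^ N) = 1" using props(1,2) by (simp add: lead_coeff_power)
    have ints: "\<And>i. coeff (f ^ N) i \<in> \<int>" by (rule Ints_coeff_power[OF props(3)])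
    have "finite {n :: nat. n \<ge> 1 \<and> gcd (int n) (u n) = 1}"
      by (rule fin_part[OF lc ints killT[unfolded w_def]])
    then show ?thesis using lin by blast
  qed
  have main: "(is_linrec w \<longleftrightarrow> (\<forall>\<alpha>\<in>A. poly (g \<alpha>) 0 = 0))
       \<and> ((\<forall>\<alpha>\<in>A. poly (g \<alpha>) 0 = 0) \<longrightarrow> finite {n :: nat. n \<ge> 1 \<and> gcd (int n) (u n) = 1})"
  proof (intro conjI impI iffI)
    show "\<forall>\<alpha>\<in>A. poly (g \<alpha>) 0 = 0" if "is_linrec w" using fwd[OF that] .
    show "is_linrec w" if "\<forall>\<alpha>\<in>A. poly (g \<alpha>) 0 = 0" using bwd[OF that] by (rule conjunct1)
    show "finite {n :: nat. n \<ge> 1 \<and> gcd (int n) (u n) = 1}" if "\<forall>\<alpha>\<in>A. poly (g \<alpha>) 0 = 0"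
      using bwd[OF that] by (rule conjunct2)
  qed
  then show ?thesis unfolding A_def f_def w_def .
qed

end
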